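(* Let $q$ be a prime power, $n\ge1$, let $f(x)\in\mathbb{F}_{q^n}[x]$ be a permutation polynomial of $\mathbb{F}_{q^n}$, and let $h_1,\dots,h_n\in\mathbb{F}_q[x]$. For $a_1,\dots,a_n,v_1,\dots,v_n\in\mathbb{F}_{q^n}$, the polynomial $$F(x)=a_1h_1(\mathrm{Tr}(v_1f(x)))+\dots+a_nh_n(\mathrm{Tr}(v_nf(x)))$$ is a permutation polynomial of $\mathbb{F}_{q^n}$ if and only if (i) both $\{a_1,\dots,a_n\}$ and $\{v_1,\dots,v_n\}$ are bases of $\mathbb{F}_{q^n}$ over $\mathbb{F}_q$, and (ii) each $h_i$, $1\le i\le n$, is a permutation polynomial of $\mathbb{F}_q$.
   Context: $\mathrm{Tr}(x)=x+x^q+\dots+x^{q^{n-1}}$ is the trace from $\mathbb{F}_{q^n}$ to $\mathbb{F}_q$. A polynomial is a permutation polynomial of a finite field if the map it induces on that field is bijective. *)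

theory Defs
  imports "HOL-Number_Theory.Number_Theory" "HOL-Computational_Algebra.Polynomial" "HOL-Library.Cardinality"
begin

text \<open>Ambient field K = F_{q^n} is a finite field type 'a with CARD('a) = q^n.
  The subfield F_q is the set of elements fixed by x \<mapsto> x^q.\<close>

definition base_field :: "nat \<Rightarrow> 'a::field set" where
  "base_field q = {x. x ^ q = x}"

definition trace_poly :: "nat \<Rightarrow> nat \<Rightarrow> 'a::comm_ring_1 poly" where
  "trace_poly q n = (\<Sum>i<n. monom 1 (q ^ i))"

definition is_basis_over :: "'a::field set \<Rightarrow> nat \<Rightarrow> (nat \<Rightarrow> 'a) \<Rightarrow> bool" where
  "is_basis_over Kq n a \<longleftrightarrow>
     (\<forall>c. (\<forall>i<n. c i \<in> Kq) \<and> (\<Sum>i<n. c i * a i) = 0 \<longrightarrow> (\<forall>i<n. c i = 0)) \<and>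
     (\<forall>y. \<exists>c. (\<forall>i<n. c i \<in> Kq) \<and> y = (\<Sum>i<n. c i * a i))"

definition poly_over :: "'a::zero set \<Rightarrow> 'a poly \<Rightarrow> bool" where
  "poly_over S p \<longleftrightarrow> (\<forall>k. coeff p k \<in> S)"

definition perm_poly_on :: "'a::comm_semiring_0 set \<Rightarrow> 'a poly \<Rightarrow> bool" where
  "perm_poly_on S p \<longleftrightarrow> bij_betw (poly p) S S"

end

theory Submission
  imports Defs
begin


definition tr :: "nat \<Rightarrow> nat \<Rightarrow> 'a::comm_ring_1 \<Rightarrow> 'a" where
  "tr q n x = (\<Sum>i<n. x ^ (q ^ i))"

lemma poly_trace: "poly (trace_poly q n) x = tr q n x"
  by (simp add: trace_poly_def tr_def poly_sum poly_monom)

lemma char_frob: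
  assumes "primepow q" "CARD('a::{field,finite}) = q ^ n" "n \<ge> 1"
  shows "(x + y :: 'a) ^ q = x ^ q + y ^ q"
proof -
  obtain p k where pk: "prime p" "k > 0" "q = p ^ k" using assms(1) unfolding primepow_def by blast
  have fin: "finite (UNIV :: 'a set)" by simp
  have pos: "CHAR('a) > 0" using finite_imp_CHAR_pos[OF fin] .
  have pc: "prime CHAR('a)" using prime_CHAR_semidom pos by blast
  have "CHAR('a) dvd p ^ (k * n)" using CHAR_dvd_CARD[where 'a='a] assms(2) pk(3)
    by (simp add: power_mult)
  hence "CHAR('a) dvd p" using pc prime_dvd_power by blast
  hence "CHAR('a) = p" using pc pk(1) primes_dvd_imp_eq by blast
  thus ?thesis using freshmans_dream'[OF pc, of q k] pk by simp
qed


lemma frob_pow: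
  assumes frob: "\<And>x y :: 'a::field. (x + y) ^ q = x ^ q + y ^ q"
  shows "(x + y :: 'a) ^ (q ^ i) = x ^ (q ^ i) + y ^ (q ^ i)"
proof (induction i arbitrary: x y)
  case (Suc i)
  have "(x + y) ^ (q ^ Suc i) = ((x + y) ^ q) ^ (q ^ i)" by (simp add: power_mult mult.commute)
  also have "\<dots> = (x ^ q + y ^ q) ^ (q ^ i)" using frob by simp
  also have "\<dots> = (x ^ q) ^ (q ^ i) + (y ^ q) ^ (q ^ i)" using Suc by simp
  finally show ?case by (simp add: power_mult mult.commute)
qed simp

lemma frob_sum:
  assumes frob: "\<And>x y :: 'a::field. (x + y) ^ q = x ^ q + y ^ q" and "q > 0"
  shows "(\<Sum>i\<in>S. f i :: 'a) ^ (q ^ j) = (\<Sum>i\<in>S. f i ^ (q ^ j))"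
proof (induction S rule: infinite_finite_induct)
  case (insert x F)
  then show ?case using frob_pow[OF frob] by simp
qed (use \<open>q > 0\<close> in auto)

lemma frob_minus:
  assumes frob: "\<And>x y :: 'a::field. (x + y) ^ q = x ^ q + y ^ q"
  shows "(x - y :: 'a) ^ q = x ^ q - y ^ q"
proof -
  have "x ^ q = ((x - y) + y) ^ q" by simp
  also have "\<dots> = (x - y) ^ q + y ^ q" by (rule frob)
  finally show ?thesis by (simp add: algebra_simps)
qed

lemma bf_0: "q > 0 \<Longrightarrow> (0::'a::field) \<in> base_field q" by (simp add: base_field_def)
lemma bf_1: "(1::'a::field) \<in> base_field q" by (simp add: base_field_def)
lemma bf_add:
  fixes x y :: "'a::field"
  assumes frob: "\<And>x y :: 'a. (x + y) ^ q = x ^ q + y ^ q"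
  shows "x \<in> base_field q \<Longrightarrow> y \<in> base_field q \<Longrightarrow> x + y \<in> base_field q"
proof -
  assume "x \<in> base_field q" "y \<in> base_field q"
  hence "x ^ q = x" "y ^ q = y" by (auto simp: base_field_def)
  hence "(x + y) ^ q = x + y" using frob[of x y] by simp
  thus ?thesis by (simp add: base_field_def)
qed
lemma bf_diff:
  fixes x y :: "'a::field"
  assumes frob: "\<And>x y :: 'a. (x + y) ^ q = x ^ q + y ^ q"
  shows "x \<in> base_field q \<Longrightarrow> y \<in> base_field q \<Longrightarrow> x - y \<in> base_field q"
proof -
  assume "x \<in> base_field q" "y \<in> base_field q"
  hence "x ^ q = x" "y ^ q = y" by (auto simp: base_field_def)
  hence "(x - y) ^ q = x - y" using frob_minus[OF frob, of x y] by simp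
  thus ?thesis by (simp add: base_field_def)
qed
lemma bf_mult: "x \<in> base_field q \<Longrightarrow> y \<in> base_field q \<Longrightarrow> (x::'a::field) * y \<in> base_field q"
  by (simp add: base_field_def power_mult_distrib)
lemma bf_power: "x \<in> base_field q \<Longrightarrow> (x::'a::field) ^ k \<in> base_field q"
  by (simp add: base_field_def flip: power_mult) (metis mult.commute power_mult)
lemma bf_pow: "c \<in> base_field q \<Longrightarrow> (c::'a::field) ^ (q ^ i) = c"
proof (induction i)
  case (Suc i)
  then show ?case using Suc by (simp add: base_field_def power_mult)
qed simp

lemma bf_sum:
  assumes frob: "\<And>x y :: 'a::field. (x + y) ^ q = x ^ q + y ^ q" and "q > 0"
  shows "(\<And>i. i \<in> S \<Longrightarrow> f i \<in> base_field q) \<Longrightarrow> (\<Sum>i\<in>S. f i :: 'a) \<in> base_field q"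
proof (induction S rule: infinite_finite_induct)
  case (insert x F)
  then show ?case using bf_add[OF frob, of "f x" "sum f F"] by simp
qed (use \<open>q > 0\<close> bf_0 in auto)

lemma poly_bf:
  assumes frob: "\<And>x y :: 'a::field. (x + y) ^ q = x ^ q + y ^ q" and "q > 0"
    and "poly_over (base_field q) p" "x \<in> base_field q"
  shows "poly p (x::'a) \<in> base_field q"
  unfolding poly_altdef
  by (rule bf_sum[OF frob \<open>q>0\<close>]) (use assms in \<open>auto simp: poly_over_def intro!: bf_mult bf_power\<close>)

lemma tr_add:
  assumes frob: "\<And>x y :: 'a::field. (x + y) ^ q = x ^ q + y ^ q"
  shows "tr q n (x + y :: 'a) = tr q n x + tr q n y"
  by (simp add: tr_def frob_pow[OF frob] sum.distrib)

lemma tr_smult: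
  "c \<in> base_field q \<Longrightarrow> tr q n (c * x :: 'a::field) = c * tr q n x"
  by (simp add: tr_def power_mult_distrib bf_pow sum_distrib_left)

lemma tr_zero: "q > 0 \<Longrightarrow> tr q n (0::'a::field) = 0"
  by (simp add: tr_def power_0_left)

lemma tr_lin:
  assumes frob: "\<And>x y :: 'a::field. (x + y) ^ q = x ^ q + y ^ q" and "q > 0"
  shows "(\<And>i. i \<in> S \<Longrightarrow> c i \<in> base_field q) \<Longrightarrow>
     tr q n (\<Sum>i\<in>S. c i * x i :: 'a) = (\<Sum>i\<in>S. c i * tr q n (x i))"
proof (induction S rule: infinite_finite_induct)
  case (insert y F)
  then show ?case by (simp add: tr_add[OF frob] tr_smult)
qed (use \<open>q > 0\<close> tr_zero in auto)

lemma tr_bf: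
  assumes frob: "\<And>x y :: 'a::field. (x + y) ^ q = x ^ q + y ^ q" and "q > 0"
    and fixq: "\<And>x::'a. x ^ (q ^ n) = x"
  shows "tr q n (x::'a) \<in> base_field q"
proof -
  define g where "g i = x ^ (q ^ i)" for i
  have "(tr q n x) ^ q = (\<Sum>i<n. g i ^ (q ^ 1))"
    unfolding tr_def g_def using frob_sum[OF frob \<open>q>0\<close>, of "\<lambda>i. x ^ (q ^ i)" "{..<n}" 1] by simp
  also have "\<dots> = (\<Sum>i<n. g (Suc i))" by (simp add: g_def power_mult[symmetric] mult.commute)
  also have "\<dots> = (\<Sum>i<n. g i)"
  proof -
    have "(\<Sum>i<Suc n. g i) = g 0 + (\<Sum>i<n. g (Suc i))" by (rule sum.lessThan_Suc_shift)
    moreover have "(\<Sum>i<Suc n. g i) = (\<Sum>i<n. g i) + g n" by simp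
    moreover have "g n = g 0" using fixq by (simp add: g_def)
    ultimately show ?thesis by (simp add: add.commute)
  qed
  finally show ?thesis by (simp add: base_field_def tr_def g_def)
qed

lemma field_power_card:
  fixes x :: "'a :: {field,finite}"
  shows   "x ^ card (UNIV :: 'a set) = x"
proof (cases "x = 0")
  case False
  have "x * (\<Prod>y\<in>UNIV-{0}. x * y) = x * x ^ (card (UNIV :: 'a set) - 1) * \<Prod>(UNIV-{0})"
    by (simp add: prod.distrib mult_ac)
  also have "x * x ^ (card (UNIV :: 'a set) - 1) = x ^ Suc (card (UNIV :: 'a set) - 1)"
    by (subst power_Suc) auto
  also have "Suc (card (UNIV :: 'a set) - 1) = card (UNIV :: 'a set)"
    using finite_UNIV_card_ge_0[where ?'a = 'a] by simp
  also have "(\<Prod>y\<in>UNIV-{0}. x * y) = (\<Prod>y\<in>UNIV-{0}. y)"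
    by (rule prod.reindex_bij_witness[of _ "\<lambda>y. y / x" "\<lambda>y. x * y"]) (use False in auto)
  finally show ?thesis
    by simp
qed (use finite_UNIV_card_ge_0[where ?'a = 'a] in auto)

lemma card_bf:
  assumes "q \<ge> 2"
  shows "card (base_field q :: 'a::field set) \<le> q"
proof -
  define p :: "'a poly" where "p = monom 1 q - [:0,1:]"
  have c: "coeff p q = 1" using assms by (simp add: p_def coeff_pCons split: nat.split)
  hence "p \<noteq> 0" by auto
  have "degree p \<le> q" unfolding p_def
    by (rule degree_diff_le) (use assms in \<open>auto simp: degree_monom_le\<close>)
  have "base_field q = {x. poly p x = 0}" by (auto simp: base_field_def p_def poly_monom)
  thus ?thesis using card_poly_roots_bound[OF \<open>p \<noteq> 0\<close>] \<open>degree p \<le> q\<close> by simp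
qed


lemma tr_nondeg:
  assumes "q \<ge> 2" "n \<ge> 1" "CARD('a::{field,finite}) = q ^ n"
  shows "\<exists>w::'a. tr q n w \<noteq> 0"
proof (rule ccontr)
  assume "\<not> ?thesis"
  have q1: "Suc 0 \<le> q" using assms(1) by simp
  from \<open>\<not> ?thesis\<close> have all: "\<forall>w::'a. poly (trace_poly q n) w = 0" by (simp add: poly_trace)
  have inj: "q ^ i = q ^ (n - 1) \<longleftrightarrow> i = n - 1" for i using assms(1) by (simp add: power_inject_exp)
  have "coeff (trace_poly q n :: 'a poly) (q ^ (n-1)) = (\<Sum>i<n. if i = n - 1 then 1 else 0)"
    unfolding trace_poly_def coeff_sum using inj by (intro sum.cong refl) (auto simp add: coeff_monom)
  also have "\<dots> = 1" using assms(2) by (subst sum.delta) auto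
  finally have "trace_poly q n \<noteq> (0::'a poly)" by auto
  moreover have "degree (trace_poly q n :: 'a poly) \<le> q ^ (n-1)"
    unfolding trace_poly_def
    by (rule degree_sum_le) (auto intro!: order.trans[OF degree_monom_le] power_increasing simp: q1)
  ultimately have "card {x::'a. poly (trace_poly q n) x = 0} \<le> q ^ (n-1)"
    using card_poly_roots_bound order.trans by blast
  hence "q ^ n \<le> q ^ (n - 1)" using all assms(3) by simp
  moreover have "q ^ (n-1) < q ^ n" using assms by (intro power_strict_increasing) auto
  ultimately show False by simp
qed



lemma indep_inj:
  fixes a :: "nat \<Rightarrow> 'a::field"
  assumes frob: "\<And>x y :: 'a. (x + y) ^ q = x ^ q + y ^ q"
    and ind: "\<forall>c. (\<forall>i<n. c i \<in> base_field q) \<and> (\<Sum>i<n. c i * a i) = 0 \<longrightarrow> (\<forall>i<n. c i = 0)"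
  shows "inj_on (\<lambda>c. \<Sum>i<n. c i * a i) (PiE {..<n} (\<lambda>_. base_field q))"
proof (rule inj_onI)
  fix c d assume c: "c \<in> PiE {..<n} (\<lambda>_. base_field q)" and d: "d \<in> PiE {..<n} (\<lambda>_. base_field q)"
    and eq: "(\<Sum>i<n. c i * a i) = (\<Sum>i<n. d i * a i)"
  define e where "e i = c i - d i" for i
  have "\<forall>i<n. e i \<in> base_field q" using c d bf_diff[OF frob] by (auto simp: e_def)
  moreover have "(\<Sum>i<n. e i * a i) = 0"
    using eq by (simp add: e_def left_diff_distrib sum_subtractf)
  ultimately have "\<forall>i<n. e i = 0" using ind by blast
  thus "c = d" using c d by (intro PiE_ext[OF c d]) (auto simp: e_def)
qed

lemma lin_of_basis:
  fixes a :: "nat \<Rightarrow> 'a::field"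
  assumes frob: "\<And>x y :: 'a. (x + y) ^ q = x ^ q + y ^ q"
    and b: "is_basis_over (base_field q) n a"
  shows "bij_betw (\<lambda>c. \<Sum>i<n. c i * a i) (PiE {..<n} (\<lambda>_. base_field q)) UNIV"
  unfolding bij_betw_def
proof
  show "inj_on (\<lambda>c. \<Sum>i<n. c i * a i) (PiE {..<n} (\<lambda>_. base_field q))"
    using b unfolding is_basis_over_def by (intro indep_inj[OF frob]) blast
  show "(\<lambda>c. \<Sum>i<n. c i * a i) ` (PiE {..<n} (\<lambda>_. base_field q)) = UNIV"
  proof -
    have "y \<in> (\<lambda>c. \<Sum>i<n. c i * a i) ` (PiE {..<n} (\<lambda>_. base_field q))" for y :: 'a
    proof -
      obtain c where c: "\<forall>i<n. c i \<in> base_field q" "y = (\<Sum>i<n. c i * a i)"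
        using b unfolding is_basis_over_def by blast
      have "restrict c {..<n} \<in> PiE {..<n} (\<lambda>_. base_field q)" using c by auto
      moreover have "y = (\<Sum>i<n. restrict c {..<n} i * a i)" using c by simp
      ultimately show ?thesis by blast
    qed
    thus ?thesis by blast
  qed
qed

lemma basis_of_lin:
  fixes a :: "nat \<Rightarrow> 'a::field"
  assumes "q > 0"
    and bij: "bij_betw (\<lambda>c. \<Sum>i<n. c i * a i) (PiE {..<n} (\<lambda>_. base_field q)) UNIV"
  shows "is_basis_over (base_field q) n a"
  unfolding is_basis_over_def
proof (intro conjI allI impI)
  fix c i assume c: "(\<forall>i<n. c i \<in> base_field q) \<and> (\<Sum>i<n. c i * a i) = 0" and i: "i < n"
  have r: "restrict c {..<n} \<in> PiE {..<n} (\<lambda>_. base_field q)" using c by auto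
  have z: "(\<lambda>i\<in>{..<n}. 0) \<in> PiE {..<n} (\<lambda>_. base_field q)" using bf_0[OF \<open>q>0\<close>] by auto
  have "(\<Sum>i<n. restrict c {..<n} i * a i) = (\<Sum>i<n. (\<lambda>i\<in>{..<n}. 0) i * a i)" using c by simp
  hence "restrict c {..<n} = (\<lambda>i\<in>{..<n}. 0)"
    using bij r z unfolding bij_betw_def inj_on_def by blast
  thus "c i = 0" using i by (metis lessThan_iff restrict_apply')
next
  fix y :: 'a
  have "y \<in> (\<lambda>c. \<Sum>i<n. c i * a i) ` (PiE {..<n} (\<lambda>_. base_field q))" using bij by (simp add: bij_betw_def)
  then obtain c where "c \<in> PiE {..<n} (\<lambda>_. base_field q)" "y = (\<Sum>i<n. c i * a i)" by blast
  thus "\<exists>c. (\<forall>i<n. c i \<in> base_field q) \<and> y = (\<Sum>i<n. c i * a i)" by auto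
qed



theorem theorem2p1:
  fixes q n :: nat
    and f :: "'a::{field,finite} poly"
    and h :: "nat \<Rightarrow> 'a poly"
    and a v :: "nat \<Rightarrow> 'a"
  assumes "primepow q"
    and "n \<ge> 1"
    and "CARD('a) = q ^ n"
    and "perm_poly_on UNIV f"
    and "\<forall>i<n. poly_over (base_field q) (h i)"
  shows "perm_poly_on UNIV (\<Sum>i<n. smult (a i) (pcompose (h i)
            (pcompose (trace_poly q n) (smult (v i) f))))
     \<longleftrightarrow> (is_basis_over (base_field q) n a \<and> is_basis_over (base_field q) n v
          \<and> (\<forall>i<n. perm_poly_on (base_field q) (h i)))"
proof -
  note pp = assms(1) and n1 = assms(2) and card = assms(3) and fperm = assms(4) and hover = assms(5)
  obtain p k where pk: "prime p" "k > 0" "q = p ^ k" using pp unfolding primepow_def by blast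
  have "p \<le> q" using pk prime_ge_2_nat[OF pk(1)] by (auto intro!: self_le_power)
  hence q2: "q \<ge> 2" using prime_ge_2_nat[OF pk(1)] by simp
  hence q0: "q > 0" by simp
  have frob: "\<And>x y :: 'a. (x + y) ^ q = x ^ q + y ^ q" using char_frob[OF pp card n1] .
  have fixq: "\<And>x :: 'a. x ^ (q ^ n) = x" using field_power_card[where 'a='a] card by simp
  define Fq where "Fq = (base_field q :: 'a set)"
  define P where "P = PiE {..<n} (\<lambda>_. Fq)"
  define T where "T y = (\<lambda>i\<in>{..<n}. tr q n (v i * y))" for y
  define H where "H c = (\<lambda>i\<in>{..<n}. poly (h i) (c i))" for c
  define A where "A = (\<lambda>c. \<Sum>i<n. c i * a i)"
  define G where "G y = A (H (T y))" for y
  let ?F = "\<Sum>i<n. smult (a i) (pcompose (h i) (pcompose (trace_poly q n) (smult (v i) f)))"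
  have TP: "T y \<in> P" for y using tr_bf[OF frob q0 fixq] by (auto simp: T_def P_def Fq_def)
  have HP: "c \<in> P \<Longrightarrow> H c \<in> P" for c
    using poly_bf[OF frob q0] hover by (auto simp: H_def P_def Fq_def)
  have finFq: "finite Fq" by simp
  have finP: "finite P" unfolding P_def by (simp add: finite_PiE)
  have cardP: "card P = card Fq ^ n" unfolding P_def by (simp add: card_PiE)
  have cardU: "card (UNIV :: 'a set) = q ^ n" using card by simp
  have polyF: "poly ?F x = G (poly f x)" for x
    by (simp add: poly_sum poly_pcompose poly_trace G_def A_def H_def T_def mult.commute)
  have "perm_poly_on UNIV ?F \<longleftrightarrow> bij G"
  proof -
    have bf: "bij (poly f)" using fperm by (simp add: perm_poly_on_def)
    have e1: "poly ?F = G \<circ> poly f" using polyF by auto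
    have e2: "G = poly ?F \<circ> inv_into UNIV (poly f)"
      using bf by (auto simp: e1 bij_is_surj surj_f_inv_f)
    have "bij (poly ?F) \<longleftrightarrow> bij G"
    proof
      assume "bij (poly ?F)"
      hence "bij (poly ?F \<circ> inv_into UNIV (poly f))" by (intro bij_comp bij_imp_bij_inv bf)
      thus "bij G" using e2 by simp
    next
      assume "bij G"
      hence "bij (G \<circ> poly f)" by (intro bij_comp bf)
      thus "bij (poly ?F)" using e1 by simp
    qed
    thus ?thesis unfolding perm_poly_on_def .
  qed
  also have "bij G \<longleftrightarrow> (is_basis_over Fq n a \<and> is_basis_over Fq n v \<and> (\<forall>i<n. perm_poly_on Fq (h i)))"
  proof
    assume R: "is_basis_over Fq n a \<and> is_basis_over Fq n v \<and> (\<forall>i<n. perm_poly_on Fq (h i))"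
    have injA: "inj_on A P"
      using lin_of_basis[OF frob, of n a] R by (simp add: A_def P_def Fq_def bij_betw_def)
    have injH: "inj_on H P"
    proof (rule inj_onI)
      fix c d assume c: "c \<in> P" and d: "d \<in> P" and eq: "H c = H d"
      show "c = d" unfolding P_def
      proof (rule PiE_ext)
        show "c \<in> PiE {..<n} (\<lambda>_. Fq)" "d \<in> PiE {..<n} (\<lambda>_. Fq)" using c d by (auto simp: P_def)
        fix i assume i: "i \<in> {..<n}"
        have "poly (h i) (c i) = poly (h i) (d i)" using fun_cong[OF eq, of i] i by (simp add: H_def)
        moreover have "inj_on (poly (h i)) Fq" using R i by (auto simp: perm_poly_on_def bij_betw_def)
        moreover have "c i \<in> Fq" "d i \<in> Fq" using c d i by (auto simp: P_def)
        ultimately show "c i = d i" by (auto dest: inj_onD)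
      qed
    qed
    have injT: "inj T"
    proof (rule injI)
      fix y y' assume eq: "T y = T y'"
      show "y = y'"
      proof (rule ccontr)
        assume ne: "y \<noteq> y'"
        define d where "d = y - y'"
        have dnz: "d \<noteq> 0" using ne by (simp add: d_def)
        have z: "tr q n (v i * d) = 0" if i: "i < n" for i
        proof -
          have "tr q n (v i * y) = tr q n (v i * y')" using fun_cong[OF eq, of i] i by (simp add: T_def)
          moreover have "v i * y = v i * d + v i * y'" by (simp add: d_def algebra_simps)
          ultimately show ?thesis using tr_add[OF frob, of n "v i * d" "v i * y'"] by simp
        qed
        obtain w :: 'a where w: "tr q n w \<noteq> 0" using tr_nondeg[OF q2 n1 card] by blast
        obtain c where c: "\<forall>i<n. c i \<in> Fq" "w / d = (\<Sum>i<n. c i * v i)"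
          using R unfolding is_basis_over_def by blast
        have "w = (\<Sum>i<n. c i * v i) * d" using c(2) dnz by (simp add: field_simps)
        also have "\<dots> = (\<Sum>i<n. c i * (v i * d))" by (simp add: sum_distrib_right mult.assoc)
        finally have "tr q n w = (\<Sum>i<n. c i * tr q n (v i * d))"
          using tr_lin[OF frob q0, of "{..<n}" c n "\<lambda>i. v i * d"] c(1) by (simp add: Fq_def)
        also have "\<dots> = 0" using z by simp
        finally show False using w by simp
      qed
    qed
    have "inj G"
    proof (rule injI)
      fix y y' assume "G y = G y'"
      hence "H (T y) = H (T y')" using injA HP TP unfolding G_def inj_on_def by blast
      hence "T y = T y'" using injH TP unfolding inj_on_def by blast
      thus "y = y'" using injT by (simp add: inj_eq)
    qed
    thus "bij G" by (simp add: bij_def finite_UNIV_inj_surj)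
  next
    assume bG: "bij G"
    have injT: "inj T"
    proof (rule injI)
      fix y y' assume "T y = T y'"
      hence "G y = G y'" by (simp add: G_def)
      thus "y = y'" using bG by (simp add: bij_def inj_eq)
    qed
    have "q ^ n \<le> card Fq ^ n"
      using card_inj_on_le[OF injT _ finP] TP cardP cardU by auto
    moreover have "card Fq \<le> q" using card_bf[OF q2] by (simp add: Fq_def)
    ultimately have cFq: "card Fq = q"
      using power_strict_mono[of "card Fq" q n] n1 by (cases "card Fq < q") auto
    hence cP: "card P = card (UNIV :: 'a set)" using cardP cardU by simp
    have TU: "T ` UNIV = P"
    proof -
      have "T ` UNIV \<subseteq> P" using TP by auto
      moreover have "card (T ` UNIV) = card P" using card_image[OF injT] cP by simp
      ultimately show ?thesis using card_subset_eq[OF finP] by blast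
    qed
    have GU: "G ` UNIV = A ` (H ` P)" unfolding G_def TU[symmetric] by auto
    have AHP: "A ` (H ` P) = UNIV" using bG GU by (simp add: bij_def)
    have HPP: "H ` P \<subseteq> P" using HP by auto
    have c1: "card (UNIV :: 'a set) \<le> card (H ` P)"
      using card_image_le[of "H ` P" A] finP HPP AHP by (metis finite_subset)
    have c2: "card (H ` P) \<le> card P" using card_image_le[OF finP] .
    have cHP: "card (H ` P) = card P" using c1 c2 cP by simp
    have injH: "inj_on H P" using eq_card_imp_inj_on[OF finP cHP] .
    have HPe: "H ` P = P" using card_subset_eq[OF finP HPP cHP] .
    have AP: "A ` P = UNIV" using AHP HPe by simp
    have "card (A ` P) = card P" using AP cP by simp
    hence injA: "inj_on A P" by (rule eq_card_imp_inj_on[OF finP])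
    have basA: "is_basis_over Fq n a"
      using basis_of_lin[OF q0, where n=n and a=a] injA AP by (simp add: A_def P_def Fq_def bij_betw_def)
    have permh: "perm_poly_on Fq (h i)" if i: "i < n" for i
    proof -
      have inj: "inj_on (poly (h i)) Fq"
      proof (rule inj_onI)
        fix x y assume x: "x \<in> Fq" and y: "y \<in> Fq" and eq: "poly (h i) x = poly (h i) y"
        define c where "c = (\<lambda>j\<in>{..<n}. if j = i then x else 0)"
        define d where "d = (\<lambda>j\<in>{..<n}. if j = i then y else 0)"
        have "0 \<in> Fq" using bf_0[OF q0] by (simp add: Fq_def)
        hence cd: "c \<in> P" "d \<in> P" using x y by (auto simp: c_def d_def P_def)
        have "H c = H d" using eq by (auto simp: H_def c_def d_def)
        hence "c = d" using injH cd by (auto dest: inj_onD)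
        hence "c i = d i" by simp
        thus "x = y" using i by (simp add: c_def d_def)
      qed
      have "poly (h i) ` Fq \<subseteq> Fq" using poly_bf[OF frob q0] hover i by (auto simp: Fq_def)
      thus ?thesis using endo_inj_surj[OF finFq _ inj] inj by (simp add: perm_poly_on_def bij_betw_def)
    qed
    define C where "C = (\<lambda>c. \<Sum>i<n. c i * v i)"
    have e_in: "(\<lambda>i\<in>{..<n}. if i = j then 1 else 0) \<in> P" for j
      using bf_0[OF q0] bf_1 by (auto simp: P_def Fq_def)
    have trC: "tr q n (C c * y) = (\<Sum>i<n. c i * T y i)" if c: "c \<in> P" for c y
    proof -
      have "C c * y = (\<Sum>i<n. c i * (v i * y))" by (simp add: C_def sum_distrib_right mult.assoc)
      hence "tr q n (C c * y) = (\<Sum>i<n. c i * tr q n (v i * y))"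
        using tr_lin[OF frob q0, of "{..<n}" c n "\<lambda>i. v i * y"] c by (auto simp: P_def Fq_def)
      thus ?thesis by (simp add: T_def)
    qed
    have coord: "tr q n (C c * y) = c j" if c: "c \<in> P" and j: "j < n"
      and y: "T y = (\<lambda>i\<in>{..<n}. if i = j then 1 else 0)" for c j y
    proof -
      have "tr q n (C c * y) = (\<Sum>i<n. if i = j then c i else 0)"
        unfolding trC[OF c] y by (intro sum.cong refl) auto
      also have "\<dots> = c j" using j by (subst sum.delta) auto
      finally show ?thesis .
    qed
    have injC: "inj_on C P"
    proof (rule inj_onI)
      fix c d assume c: "c \<in> P" and d: "d \<in> P" and eq: "C c = C d"
      show "c = d" unfolding P_def
      proof (rule PiE_ext)
        show "c \<in> PiE {..<n} (\<lambda>_. Fq)" "d \<in> PiE {..<n} (\<lambda>_. Fq)" using c d by (auto simp: P_def)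
        fix j assume j: "j \<in> {..<n}"
        obtain y where y: "T y = (\<lambda>i\<in>{..<n}. if i = j then 1 else 0)"
          using e_in[of j] TU by (metis imageE)
        show "c j = d j" using coord[OF c _ y] coord[OF d _ y] j eq by simp
      qed
    qed
    have "card (C ` P) = card (UNIV :: 'a set)" using card_image[OF injC] cP by simp
    hence CP: "C ` P = UNIV" by (simp add: card_eq_UNIV_imp_eq_UNIV)
    have basV: "is_basis_over Fq n v"
      using basis_of_lin[OF q0, where n=n and a=v] injC CP by (simp add: C_def P_def Fq_def bij_betw_def)
    show "is_basis_over Fq n a \<and> is_basis_over Fq n v \<and> (\<forall>i<n. perm_poly_on Fq (h i))"
      using basA basV permh by blast
  qed
  finally show ?thesis by (simp add: Fq_def)
qed


end
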